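(* For $M>0$ let $\mathcal B_M$ be the set of Borel probability measures on $\mathbb R$ with support contained in $[-M,M]$. Fix $\gamma>0$. Then: (1) for every $\mu\in\mathcal B_M$, $(2+2M^2/\gamma^2)^{-1}P_\gamma\le P_\gamma*\mu\le(\pi\gamma)^{-1}$ pointwise on $\mathbb R$; (2) $\sup_{\mu\in\mathcal B_M}|\log((P_\gamma*\mu)(t))|\le|\log P_\gamma(t)|+C_{M,\gamma}$ for every $t\in\mathbb R$, where $C_{M,\gamma}=\log(2+2M^2/\gamma^2)+|\log\pi\gamma|$; (3) for every compactly supported Borel probability measure $\mu$ and every Borel probability measure $\nu$ on $\mathbb R$ with $\int x^2\nu(dx)<\infty$, the function $(\log(P_\gamma*\mu))\cdot(P_\gamma*\nu)$ is Lebesgue integrable; hence the Cauchy cross-entropy $H_\gamma(\nu,\mu)$ is well defined (and finite).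
   Context: $P_\gamma(x)=\frac{\gamma}{\pi(x^2+\gamma^2)}$ and $(P_\gamma*\mu)(x)=\int P_\gamma(x-t)\mu(dt)$. $H_\gamma(\nu,\mu)=-\int(P_\gamma*\nu)(x)\log(P_\gamma*\mu)(x)\,dx$ (equivalently $\int\ell_\gamma(x,\mu)(P_\gamma*\nu)(x)dx$ with $\ell_\gamma(x,\mu)=-\log[-\frac1\pi\operatorname{Im}G_\mu(x+i\gamma)]$, $G_\mu(z)=\int\frac{\mu(dt)}{z-t}$). *)

theory Defs
  imports "HOL-Probability.Probability"
begin

definition cauchy_kernel :: "real \<Rightarrow> real \<Rightarrow> real" where
  "cauchy_kernel \<gamma> x = \<gamma> / (pi * (x\<^sup>2 + \<gamma>\<^sup>2))"

definition cauchy_conv :: "real \<Rightarrow> real measure \<Rightarrow> real \<Rightarrow> real" where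
  "cauchy_conv \<gamma> \<mu> x = (\<integral>t. cauchy_kernel \<gamma> (x - t) \<partial>\<mu>)"

definition borel_prob :: "real measure \<Rightarrow> bool" where
  "borel_prob \<mu> \<longleftrightarrow> prob_space \<mu> \<and> sets \<mu> = sets borel"

definition measure_support :: "real measure \<Rightarrow> real set" where
  "measure_support \<mu> = {x. \<forall>e>0. emeasure \<mu> (ball x e) > 0}"

definition B_set :: "real \<Rightarrow> real measure set" where
  "B_set M = {\<mu>. borel_prob \<mu> \<and> measure_support \<mu> \<subseteq> {-M..M}}"

end

theory Submission imports Defs "HOL-Real_Asymp.Real_Asymp" begin

lemma support_AE:
  assumes bp: "borel_prob \<mu>" and sup: "measure_support \<mu> \<subseteq> {-M..M}"
  shows "AE t in \<mu>. t \<in> {-M..M}"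
proof -
  define F where "F = {ball x e | x e. e > 0 \<and> emeasure \<mu> (ball x e) = 0}"
  have sets: "sets \<mu> = sets borel" using bp by (simp add: borel_prob_def)
  obtain F' where F': "F' \<subseteq> F" "countable F'" "\<Union>F' = \<Union>F"
    using Lindelof[of F] unfolding F_def by auto
  have null: "(\<Union>B\<in>F'. B) \<in> null_sets \<mu>"
  proof (rule null_sets_UN'[OF F'(2)])
    fix B assume "B \<in> F'"
    then obtain x e where "B = ball x e" "emeasure \<mu> (ball x e) = 0" using F' unfolding F_def by auto
    then show "B \<in> null_sets \<mu>" using sets by (auto simp: null_sets_def)
  qed
  show ?thesis
  proof (rule AE_I'[OF null])
    show "{x \<in> space \<mu>. x \<notin> {-M..M}} \<subseteq> (\<Union>B\<in>F'. B)"
    proof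
      fix x assume x: "x \<in> {x \<in> space \<mu>. x \<notin> {-M..M}}"
      then have "x \<notin> measure_support \<mu>" using sup by auto
      then obtain e where "e > 0" "\<not> emeasure \<mu> (ball x e) > 0" unfolding measure_support_def by auto
      then have "ball x e \<in> F" unfolding F_def by (auto simp: zero_less_iff_neq_zero)
      then have "x \<in> \<Union>F" using \<open>e > 0\<close> by (intro UnionI[of "ball x e"]) auto
      then show "x \<in> (\<Union>B\<in>F'. B)" using F'(3) by auto
    qed
  qed
qed

lemma kernel_pos: "\<gamma> > 0 \<Longrightarrow> cauchy_kernel \<gamma> x > 0"
  unfolding cauchy_kernel_def by (auto intro!: divide_pos_pos mult_pos_pos add_nonneg_pos)

lemma kernel_le: assumes "\<gamma> > 0" shows "cauchy_kernel \<gamma> x \<le> 1 / (pi * \<gamma>)"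
proof -
  have p: "pi * \<gamma>\<^sup>2 > 0" using assms by simp
  have "pi * \<gamma>\<^sup>2 \<le> pi * (x\<^sup>2 + \<gamma>\<^sup>2)" by simp
  then have "\<gamma> / (pi * (x\<^sup>2 + \<gamma>\<^sup>2)) \<le> \<gamma> / (pi * \<gamma>\<^sup>2)"
    using p assms by (intro divide_left_mono mult_pos_pos) (auto intro!: mult_pos_pos add_nonneg_pos)
  also have "\<dots> = 1 / (pi * \<gamma>)" using assms by (simp add: power2_eq_square)
  finally show ?thesis unfolding cauchy_kernel_def .
qed

lemma kernel_meas[measurable]: "(\<lambda>x. cauchy_kernel \<gamma> x) \<in> borel_measurable borel"
  unfolding cauchy_kernel_def by measurable

lemma kernel_lower:
  assumes g: "\<gamma> > 0" and t: "\<bar>t\<bar> \<le> M"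
  shows "cauchy_kernel \<gamma> x / (2 + 2 * M\<^sup>2 / \<gamma>\<^sup>2) \<le> cauchy_kernel \<gamma> (x - t)"
proof -
  define K where "K = 2 + 2 * M\<^sup>2 / \<gamma>\<^sup>2"
  have t2: "t\<^sup>2 \<le> M\<^sup>2" using t by (metis abs_ge_zero abs_le_square_iff power2_abs order_trans abs_le_D1 power_mono abs_abs)
  have a0: "2 * x\<^sup>2 + 2 * t\<^sup>2 - (x - t)\<^sup>2 = (x + t)\<^sup>2" by (simp add: power2_eq_square algebra_simps)
  have a: "(x - t)\<^sup>2 \<le> 2 * x\<^sup>2 + 2 * t\<^sup>2" using a0 zero_le_power2[of "x + t"] by linarith
  have a1: "2 * M\<^sup>2 * x\<^sup>2 / \<gamma>\<^sup>2 \<ge> 0" by simp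
  have "K * (x\<^sup>2 + \<gamma>\<^sup>2) = 2 * x\<^sup>2 + 2 * \<gamma>\<^sup>2 + 2 * M\<^sup>2 * x\<^sup>2 / \<gamma>\<^sup>2 + 2 * M\<^sup>2"
    using g unfolding K_def by (simp add: field_simps power2_eq_square)
  also have "\<dots> \<ge> (x - t)\<^sup>2 + \<gamma>\<^sup>2" using a t2 a1 zero_le_power2[of \<gamma>] by linarith
  finally have le: "(x - t)\<^sup>2 + \<gamma>\<^sup>2 \<le> K * (x\<^sup>2 + \<gamma>\<^sup>2)" .
  have Kp: "K > 0" unfolding K_def using g by (simp add: add_pos_nonneg)
  have p1: "(x - t)\<^sup>2 + \<gamma>\<^sup>2 > 0" using g by (simp add: add_nonneg_pos)
  have p2: "x\<^sup>2 + \<gamma>\<^sup>2 > 0" using g by (simp add: add_nonneg_pos)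
  have "\<gamma> / (pi * (x\<^sup>2 + \<gamma>\<^sup>2)) / K = \<gamma> / (pi * (K * (x\<^sup>2 + \<gamma>\<^sup>2)))" by (simp add: field_simps)
  also have "\<dots> \<le> \<gamma> / (pi * ((x - t)\<^sup>2 + \<gamma>\<^sup>2))"
    using le p1 g Kp p2 by (intro divide_left_mono mult_left_mono mult_pos_pos) auto
  finally show ?thesis unfolding cauchy_kernel_def K_def .
qed

lemma conv_integrable:
  assumes g: "\<gamma> > 0" and bp: "borel_prob \<mu>"
  shows "integrable \<mu> (\<lambda>t. cauchy_kernel \<gamma> (x - t))"
proof -
  interpret prob_space \<mu> using bp by (simp add: borel_prob_def)
  have sets: "sets \<mu> = sets borel" using bp by (simp add: borel_prob_def)
  have m0: "(\<lambda>t. cauchy_kernel \<gamma> (x - t)) \<in> borel_measurable borel" by measurable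
  have m: "(\<lambda>t. cauchy_kernel \<gamma> (x - t)) \<in> borel_measurable \<mu>"
    by (subst measurable_cong_sets[OF sets refl]) (rule m0)
  show ?thesis
    by (rule integrable_const_bound[where B="1 / (pi * \<gamma>)"])
       (use m kernel_le[OF g] kernel_pos[OF g] in \<open>auto simp: less_imp_le\<close>)
qed

lemma conv_bounds:
  assumes g: "\<gamma> > 0" and bp: "borel_prob \<mu>" and sup: "measure_support \<mu> \<subseteq> {-M..M}"
  shows "cauchy_kernel \<gamma> x / (2 + 2 * M\<^sup>2 / \<gamma>\<^sup>2) \<le> cauchy_conv \<gamma> \<mu> x
       \<and> cauchy_conv \<gamma> \<mu> x \<le> 1 / (pi * \<gamma>)"
proof -
  interpret prob_space \<mu> using bp by (simp add: borel_prob_def)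
  note int = conv_integrable[OF g bp, of x]
  have "cauchy_kernel \<gamma> x / (2 + 2 * M\<^sup>2 / \<gamma>\<^sup>2) = (\<integral>t. cauchy_kernel \<gamma> x / (2 + 2 * M\<^sup>2 / \<gamma>\<^sup>2) \<partial>\<mu>)"
    by (simp add: prob_space)
  also have "\<dots> \<le> cauchy_conv \<gamma> \<mu> x" unfolding cauchy_conv_def
    using int
    by (intro integral_mono_AE) (auto intro!: kernel_lower[OF g] eventually_mono[OF support_AE[OF bp sup]])
  finally have 1: "cauchy_kernel \<gamma> x / (2 + 2 * M\<^sup>2 / \<gamma>\<^sup>2) \<le> cauchy_conv \<gamma> \<mu> x" .
  have "cauchy_conv \<gamma> \<mu> x \<le> (\<integral>t. 1 / (pi * \<gamma>) \<partial>\<mu>)" unfolding cauchy_conv_def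
    using int by (intro integral_mono) (auto intro!: kernel_le[OF g])
  also have "\<dots> = 1 / (pi * \<gamma>)" by (simp add: prob_space)
  finally show ?thesis using 1 by simp
qed

lemma B_nonempty: assumes "M > 0" shows "return borel 0 \<in> B_set M"
proof -
  have "measure_support (return borel 0) \<subseteq> {0}"
  proof
    fix x assume x: "x \<in> measure_support (return borel 0)"
    have "x = 0"
    proof (rule ccontr)
      assume "x \<noteq> 0"
      then have "dist x 0 > 0" by simp
      then have "emeasure (return borel 0) (ball x (dist x 0)) > 0" using x unfolding measure_support_def by blast
      then show False by (simp add: indicator_def dist_commute)
    qed
    then show "x \<in> {0}" by simp
  qed
  then show ?thesis using assms unfolding B_set_def borel_prob_def
    by (auto intro!: prob_space_return)
qed

definition gmaj :: "real \<Rightarrow> real" where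
  "gmaj x = ((x\<^sup>2 - 1) * ln (1 + x\<^sup>2) + x\<^sup>2 + 3) / (1 + x\<^sup>2)\<^sup>2"

lemma ln_le_sq: "ln (1 + x\<^sup>2) \<le> (x::real)\<^sup>2"
  using ln_add_one_self_le_self[of "x\<^sup>2"] by simp

lemma gmaj_ge1: "1 / (1 + x\<^sup>2) \<le> gmaj x"
proof -
  have L0: "ln (1 + x\<^sup>2) \<ge> 0" by simp
  have "(x\<^sup>2 - 1) * ln (1 + x\<^sup>2) + 2 \<ge> 0"
  proof (cases "x\<^sup>2 \<ge> 1")
    case True then show ?thesis using L0 by simp
  next
    case False
    then have "(x\<^sup>2 - 1) * ln (1 + x\<^sup>2) \<ge> (-1) * ln (1 + x\<^sup>2)" using L0
      by (intro mult_right_mono) auto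
    then show ?thesis using ln_le_sq[of x] False by linarith
  qed
  then have le: "1 + x\<^sup>2 \<le> (x\<^sup>2 - 1) * ln (1 + x\<^sup>2) + x\<^sup>2 + 3" by linarith
  have p: "(0::real) < 1 + x\<^sup>2" by (simp add: add_pos_nonneg)
  then have "1 / (1 + x\<^sup>2) = (1 + x\<^sup>2) / (1 + x\<^sup>2)\<^sup>2" by (simp add: power2_eq_square)
  also have "\<dots> \<le> ((x\<^sup>2 - 1) * ln (1 + x\<^sup>2) + x\<^sup>2 + 3) / (1 + x\<^sup>2)\<^sup>2"
    using le by (rule divide_right_mono) simp
  finally show ?thesis unfolding gmaj_def .
qed

lemma gmaj_ge2: "ln (1 + x\<^sup>2) / (1 + x\<^sup>2) \<le> 2 * gmaj x"
proof -
  have L0: "ln (1 + x\<^sup>2) \<ge> 0" by simp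
  have "(x\<^sup>2 - 3) * ln (1 + x\<^sup>2) + 2 * x\<^sup>2 + 6 \<ge> 0"
  proof (cases "x\<^sup>2 \<ge> 3")
    case True then show ?thesis using L0 by simp
  next
    case False
    then have "(x\<^sup>2 - 3) * ln (1 + x\<^sup>2) \<ge> (- 3) * ln (1 + x\<^sup>2)" using L0
      by (intro mult_right_mono) auto
    then show ?thesis using ln_le_sq[of x] False by linarith
  qed
  then have le: "(1 + x\<^sup>2) * ln (1 + x\<^sup>2) \<le> 2 * ((x\<^sup>2 - 1) * ln (1 + x\<^sup>2) + x\<^sup>2 + 3)"
    by (simp add: algebra_simps)
  have p: "(0::real) < 1 + x\<^sup>2" by (simp add: add_pos_nonneg)
  then have "ln (1 + x\<^sup>2) / (1 + x\<^sup>2) = ((1 + x\<^sup>2) * ln (1 + x\<^sup>2)) / (1 + x\<^sup>2)\<^sup>2" by (simp add: power2_eq_square)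
  also have "\<dots> \<le> (2 * ((x\<^sup>2 - 1) * ln (1 + x\<^sup>2) + x\<^sup>2 + 3)) / (1 + x\<^sup>2)\<^sup>2"
    using le by (rule divide_right_mono) simp
  finally show ?thesis unfolding gmaj_def by simp
qed

lemma gmaj_nonneg: "gmaj x \<ge> 0"
proof -
  have "(0::real) \<le> 1 / (1 + x\<^sup>2)" by (simp add: add_nonneg_nonneg)
  then show ?thesis using gmaj_ge1[of x] by linarith
qed

lemma gmaj_integrable: "integrable lborel gmaj"
proof -
  define F where "F x = 3 * arctan x - x * ln (1 + x\<^sup>2) / (1 + x\<^sup>2)" for x :: real
  have pos: "\<And>x::real. 0 < 1 + x\<^sup>2" by (simp add: add_pos_nonneg)
  have D: "DERIV F x :> gmaj x" for x
    unfolding F_def gmaj_def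
    apply (rule DERIV_cong)
     apply (rule derivative_intros | (simp add: add_pos_nonneg; fail))+
    using pos[of x] apply (simp add: inverse_eq_divide)
    apply (simp add: divide_simps)
    apply (simp add: algebra_simps power2_eq_square)
    done
  have C: "isCont gmaj x" for x
    unfolding gmaj_def by (intro continuous_intros) (use pos[of x] in auto)
  have A: "((F \<circ> real_of_ereal) \<longlongrightarrow> - 3 * (pi / 2)) (at_right (-\<infinity>))"
    unfolding ereal_tendsto_simps F_def by real_asymp
  have B: "((F \<circ> real_of_ereal) \<longlongrightarrow> 3 * (pi / 2)) (at_left \<infinity>)"
    unfolding ereal_tendsto_simps F_def by real_asymp
  have "set_integrable lborel (einterval (-\<infinity>) \<infinity>) gmaj"
    by (rule interval_integral_FTC_nonneg(1)[OF _ D C _ A B]) (auto simp: gmaj_nonneg)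
  then show ?thesis by (simp add: set_integrable_def)
qed

lemma part2:
  assumes g: "\<gamma> > 0" and M: "M > 0"
  shows "(SUP \<mu>\<in>B_set M. \<bar>ln (cauchy_conv \<gamma> \<mu> t)\<bar>)
              \<le> \<bar>ln (cauchy_kernel \<gamma> t)\<bar> + (ln (2 + 2 * M\<^sup>2 / \<gamma>\<^sup>2) + \<bar>ln (pi * \<gamma>)\<bar>)"
proof (rule cSUP_least)
  show "B_set M \<noteq> {}" using B_nonempty[OF M] by blast
next
  fix \<mu> assume "\<mu> \<in> B_set M"
  then have bp: "borel_prob \<mu>" and sup: "measure_support \<mu> \<subseteq> {-M..M}" by (auto simp: B_set_def)
  define K where "K = 2 + 2 * M\<^sup>2 / \<gamma>\<^sup>2"
  define c where "c = cauchy_conv \<gamma> \<mu> t"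
  have K2: "K \<ge> 2" unfolding K_def by simp
  then have Kp: "K > 0" by simp
  have lnK: "ln K \<ge> 0" using K2 by simp
  have b: "cauchy_kernel \<gamma> t / K \<le> c" "c \<le> 1 / (pi * \<gamma>)"
    using conv_bounds[OF g bp sup, of t] unfolding K_def c_def by auto
  have Pp: "cauchy_kernel \<gamma> t > 0" using kernel_pos[OF g] .
  have ap: "cauchy_kernel \<gamma> t / K > 0" using Pp Kp by simp
  have "ln (cauchy_kernel \<gamma> t / K) \<le> ln c" using b(1) ap by (subst ln_le_cancel_iff) auto
  then have lo: "ln (cauchy_kernel \<gamma> t) - ln K \<le> ln c" using Pp Kp by (simp add: ln_div)
  have cp: "c > 0" using ap b(1) by linarith
  have "ln c \<le> ln (1 / (pi * \<gamma>))" using b(2) cp g by (subst ln_le_cancel_iff) auto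
  then have up: "ln c \<le> - ln (pi * \<gamma>)" using g by (simp add: ln_div)
  have "\<bar>ln c\<bar> \<le> \<bar>ln (cauchy_kernel \<gamma> t)\<bar> + (ln K + \<bar>ln (pi * \<gamma>)\<bar>)"
    using lo up lnK by linarith
  then show "\<bar>ln (cauchy_conv \<gamma> \<mu> t)\<bar> \<le> \<bar>ln (cauchy_kernel \<gamma> t)\<bar> + (ln (2 + 2 * M\<^sup>2 / \<gamma>\<^sup>2) + \<bar>ln (pi * \<gamma>)\<bar>)"
    unfolding c_def K_def .
qed

lemma kernel_upper_decay:
  assumes g: "\<gamma> > 0"
  shows "cauchy_kernel \<gamma> (x - t) \<le> (\<gamma> * (2 + 2 / \<gamma>\<^sup>2) / (pi * (1 + x\<^sup>2))) * (1 + t\<^sup>2)"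
proof -
  define D where "D = (x - t)\<^sup>2 + \<gamma>\<^sup>2"
  define c where "c = 2 + 2 / \<gamma>\<^sup>2"
  have Dp: "D > 0" unfolding D_def using g by (simp add: add_nonneg_pos)
  have qp: "1 + x\<^sup>2 > 0" by (simp add: add_pos_nonneg)
  have g2: "\<gamma>\<^sup>2 > 0" using g by simp
  have h0: "2 * (x - t)\<^sup>2 + 2 * t\<^sup>2 - x\<^sup>2 = (x - 2 * t)\<^sup>2" by (simp add: power2_eq_square algebra_simps)
  have h1: "x\<^sup>2 \<le> 2 * (x - t)\<^sup>2 + 2 * t\<^sup>2" using h0 zero_le_power2[of "x - 2 * t"] by linarith
  have h2: "D / \<gamma>\<^sup>2 \<ge> 1" using g2 unfolding D_def by simp
  have h3: "c * (1 + t\<^sup>2) * D = 2 * D + 2 * (t\<^sup>2 * D) + 2 * (D / \<gamma>\<^sup>2) + 2 * (t\<^sup>2 * (D / \<gamma>\<^sup>2))"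
    unfolding c_def using g2 by (simp add: field_simps)
  have h4: "t\<^sup>2 * D \<ge> 0" using Dp by simp
  have h5: "t\<^sup>2 * (D / \<gamma>\<^sup>2) \<ge> t\<^sup>2 * 1" using h2 by (intro mult_left_mono) auto
  have h6: "D \<ge> (x - t)\<^sup>2" unfolding D_def by simp
  have poly: "1 + x\<^sup>2 \<le> c * (1 + t\<^sup>2) * D" using h1 h2 h3 h4 h5 h6 by linarith
  have "cauchy_kernel \<gamma> (x - t) = \<gamma> / pi * (1 / D)" unfolding cauchy_kernel_def D_def by simp
  also have "1 / D \<le> c * (1 + t\<^sup>2) / (1 + x\<^sup>2)"
    using poly Dp qp by (simp add: divide_simps mult.commute)
  then have "\<gamma> / pi * (1 / D) \<le> \<gamma> / pi * (c * (1 + t\<^sup>2) / (1 + x\<^sup>2))"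
    using g by (intro mult_left_mono) auto
  also have "\<dots> = (\<gamma> * c / (pi * (1 + x\<^sup>2))) * (1 + t\<^sup>2)" by simp
  finally show ?thesis unfolding c_def .
qed

lemma nu_bound:
  assumes g: "\<gamma> > 0" and bp: "borel_prob \<nu>" and i2: "integrable \<nu> (\<lambda>x. x\<^sup>2)"
  shows "cauchy_conv \<gamma> \<nu> x \<le> (\<gamma> * (2 + 2 / \<gamma>\<^sup>2) * (1 + (\<integral>t. t\<^sup>2 \<partial>\<nu>)) / pi) / (1 + x\<^sup>2)"
proof -
  interpret prob_space \<nu> using bp by (simp add: borel_prob_def)
  define A where "A = \<gamma> * (2 + 2 / \<gamma>\<^sup>2) / (pi * (1 + x\<^sup>2))"
  have i1: "integrable \<nu> (\<lambda>t. 1 + t\<^sup>2)" using i2 by simp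
  have "cauchy_conv \<gamma> \<nu> x \<le> (\<integral>t. A * (1 + t\<^sup>2) \<partial>\<nu>)" unfolding cauchy_conv_def A_def
    using conv_integrable[OF g bp, of x] i1
    by (intro integral_mono) (use kernel_upper_decay[OF g] in auto)
  also have "\<dots> = A * (1 + (\<integral>t. t\<^sup>2 \<partial>\<nu>))" using i2 by (simp add: prob_space)
  also have "\<dots> = (\<gamma> * (2 + 2 / \<gamma>\<^sup>2) * (1 + (\<integral>t. t\<^sup>2 \<partial>\<nu>)) / pi) / (1 + x\<^sup>2)"
    unfolding A_def by simp
  finally show ?thesis .
qed

lemma conv_meas[measurable]:
  assumes bp: "borel_prob \<mu>"
  shows "(\<lambda>x. cauchy_conv \<gamma> \<mu> x) \<in> borel_measurable lborel"
proof -
  interpret prob_space \<mu> using bp by (simp add: borel_prob_def)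
  have sets: "sets \<mu> = sets borel" using bp by (simp add: borel_prob_def)
  have m0: "(\<lambda>(x, t). cauchy_kernel \<gamma> (x - t)) \<in> borel_measurable (lborel \<Otimes>\<^sub>M borel)" by measurable
  have m: "(\<lambda>(x, t). cauchy_kernel \<gamma> (x - t)) \<in> borel_measurable (lborel \<Otimes>\<^sub>M \<mu>)"
    by (subst measurable_cong_sets[OF sets_pair_measure_cong[OF refl sets] refl]) (rule m0)
  show ?thesis unfolding cauchy_conv_def
    by (rule borel_measurable_lebesgue_integral) (use m in simp)
qed

lemma part3:
  assumes g: "\<gamma> > 0" and bp: "borel_prob \<mu>" and cpt: "compact (measure_support \<mu>)"
    and bn: "borel_prob \<nu>" and i2: "integrable \<nu> (\<lambda>x. x\<^sup>2)"
  shows "integrable lborel (\<lambda>x. ln (cauchy_conv \<gamma> \<mu> x) * cauchy_conv \<gamma> \<nu> x)"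
proof -
  obtain a where a: "\<forall>x\<in>measure_support \<mu>. norm x \<le> a"
    using compact_imp_bounded[OF cpt] unfolding bounded_iff by blast
  define R where "R = max 1 a"
  have sup: "measure_support \<mu> \<subseteq> {-R..R}" using a unfolding R_def by (force simp: abs_le_iff)
  define K where "K = 2 + 2 * R\<^sup>2 / \<gamma>\<^sup>2"
  have Kp: "K > 0" unfolding K_def by (simp add: add_pos_nonneg)
  define a0 where "a0 = \<gamma> / (pi * (1 + \<gamma>\<^sup>2) * K)"
  have a0p: "a0 > 0" unfolding a0_def using g Kp by (simp add: add_pos_nonneg)
  define C3 where "C3 = \<bar>ln a0\<bar> + \<bar>ln (pi * \<gamma>)\<bar>"
  define B where "B = \<gamma> * (2 + 2 / \<gamma>\<^sup>2) * (1 + (\<integral>t. t\<^sup>2 \<partial>\<nu>)) / pi"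
  have lnbound: "\<bar>ln (cauchy_conv \<gamma> \<mu> x)\<bar> \<le> ln (1 + x\<^sup>2) + C3" for x
  proof -
    define c where "c = cauchy_conv \<gamma> \<mu> x"
    have qp: "1 + x\<^sup>2 > 0" by (simp add: add_pos_nonneg)
    have b: "cauchy_kernel \<gamma> x / K \<le> c" "c \<le> 1 / (pi * \<gamma>)"
      using conv_bounds[OF g bp sup, of x] unfolding K_def c_def by auto
    have p2: "x\<^sup>2 + \<gamma>\<^sup>2 > 0" using g by (simp add: add_nonneg_pos)
    have "x\<^sup>2 + \<gamma>\<^sup>2 \<le> (1 + \<gamma>\<^sup>2) * (1 + x\<^sup>2)" by (simp add: algebra_simps)
    then have "\<gamma> / (pi * ((1 + \<gamma>\<^sup>2) * (1 + x\<^sup>2))) \<le> \<gamma> / (pi * (x\<^sup>2 + \<gamma>\<^sup>2))"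
      using g p2 qp by (intro divide_left_mono mult_left_mono mult_pos_pos) (auto simp: add_pos_nonneg)
    then have "(\<gamma> / (pi * ((1 + \<gamma>\<^sup>2) * (1 + x\<^sup>2)))) / K \<le> cauchy_kernel \<gamma> x / K"
      unfolding cauchy_kernel_def using Kp by (intro divide_right_mono) auto
    moreover have "a0 / (1 + x\<^sup>2) = (\<gamma> / (pi * ((1 + \<gamma>\<^sup>2) * (1 + x\<^sup>2)))) / K"
      unfolding a0_def by (simp add: field_simps)
    ultimately have "a0 / (1 + x\<^sup>2) \<le> cauchy_kernel \<gamma> x / K" by simp
    then have lo0: "a0 / (1 + x\<^sup>2) \<le> c" using b(1) by linarith
    have ap: "a0 / (1 + x\<^sup>2) > 0" using a0p qp by simp
    have cp: "c > 0" using ap lo0 by linarith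
    have "ln (a0 / (1 + x\<^sup>2)) \<le> ln c" using lo0 ap by (subst ln_le_cancel_iff) auto
    then have lo: "ln a0 - ln (1 + x\<^sup>2) \<le> ln c" using a0p qp by (simp add: ln_div)
    have "ln c \<le> ln (1 / (pi * \<gamma>))" using b(2) cp g by (subst ln_le_cancel_iff) auto
    then have up: "ln c \<le> - ln (pi * \<gamma>)" using g by (simp add: ln_div)
    have L0: "ln (1 + x\<^sup>2) \<ge> 0" by simp
    show ?thesis using lo up L0 unfolding c_def C3_def by linarith
  qed
  have C3p: "C3 \<ge> 0" unfolding C3_def by simp
  have Bp: "B \<ge> 0" unfolding B_def using g i2
    by (intro divide_nonneg_pos mult_nonneg_nonneg) (auto intro!: add_nonneg_nonneg integral_nonneg_AE)
  have nub: "0 \<le> cauchy_conv \<gamma> \<nu> x \<and> cauchy_conv \<gamma> \<nu> x \<le> B / (1 + x\<^sup>2)" for x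
  proof
    show "0 \<le> cauchy_conv \<gamma> \<nu> x" unfolding cauchy_conv_def
      by (rule integral_nonneg_AE) (use kernel_pos[OF g] in \<open>auto intro: less_imp_le\<close>)
    show "cauchy_conv \<gamma> \<nu> x \<le> B / (1 + x\<^sup>2)" using nu_bound[OF g bn i2, of x] unfolding B_def .
  qed
  have int: "integrable lborel (\<lambda>x. B * (2 + C3) * gmaj x)"
    using gmaj_integrable by simp
  show ?thesis
  proof (rule Bochner_Integration.integrable_bound[OF int])
    show "(\<lambda>x. ln (cauchy_conv \<gamma> \<mu> x) * cauchy_conv \<gamma> \<nu> x) \<in> borel_measurable lborel"
      using conv_meas[OF bp] conv_meas[OF bn] by measurable
    show "AE x in lborel. norm (ln (cauchy_conv \<gamma> \<mu> x) * cauchy_conv \<gamma> \<nu> x) \<le> norm (B * (2 + C3) * gmaj x)"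
    proof (rule AE_I2)
      fix x :: real
      define q where "q = 1 + x\<^sup>2"
      define L where "L = ln q"
      have qp: "q > 0" unfolding q_def by (simp add: add_pos_nonneg)
      have L0: "L \<ge> 0" unfolding L_def q_def by simp
      have "norm (ln (cauchy_conv \<gamma> \<mu> x) * cauchy_conv \<gamma> \<nu> x)
          = \<bar>ln (cauchy_conv \<gamma> \<mu> x)\<bar> * cauchy_conv \<gamma> \<nu> x" using nub[of x] by (simp add: abs_mult)
      also have "\<dots> \<le> (L + C3) * (B / q)"
        using lnbound[of x] nub[of x] L0 C3p unfolding L_def q_def
        by (intro mult_mono) auto
      also have "\<dots> = B * (L / q) + B * C3 * (1 / q)" by (simp add: algebra_simps add_divide_distrib)
      also have "\<dots> \<le> B * (2 * gmaj x) + B * C3 * gmaj x"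
        using gmaj_ge1[of x] gmaj_ge2[of x] Bp C3p unfolding L_def q_def
        by (intro add_mono mult_left_mono) auto
      also have "\<dots> = norm (B * (2 + C3) * gmaj x)"
        using Bp C3p gmaj_nonneg[of x] by (simp add: algebra_simps)
      finally show "norm (ln (cauchy_conv \<gamma> \<mu> x) * cauchy_conv \<gamma> \<nu> x) \<le> norm (B * (2 + C3) * gmaj x)" .
    qed
  qed
qed

theorem mainTheorem5:
  fixes \<gamma> M :: real
  assumes "\<gamma> > 0" and "M > 0"
  shows "(\<forall>\<mu>\<in>B_set M. \<forall>x.
            cauchy_kernel \<gamma> x / (2 + 2 * M\<^sup>2 / \<gamma>\<^sup>2) \<le> cauchy_conv \<gamma> \<mu> x
          \<and> cauchy_conv \<gamma> \<mu> x \<le> 1 / (pi * \<gamma>))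
       \<and> (\<forall>t. (SUP \<mu>\<in>B_set M. \<bar>ln (cauchy_conv \<gamma> \<mu> t)\<bar>)
              \<le> \<bar>ln (cauchy_kernel \<gamma> t)\<bar> + (ln (2 + 2 * M\<^sup>2 / \<gamma>\<^sup>2) + \<bar>ln (pi * \<gamma>)\<bar>))
       \<and> (\<forall>\<mu> \<nu>. borel_prob \<mu> \<and> compact (measure_support \<mu>)
              \<and> borel_prob \<nu> \<and> integrable \<nu> (\<lambda>x. x\<^sup>2)
           \<longrightarrow> integrable lborel (\<lambda>x. ln (cauchy_conv \<gamma> \<mu> x) * cauchy_conv \<gamma> \<nu> x))"
proof (intro conjI allI ballI impI)
  fix \<mu> x assume "\<mu> \<in> B_set M"
  then have bp: "borel_prob \<mu>" and sup: "measure_support \<mu> \<subseteq> {-M..M}" by (auto simp: B_set_def)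
  note cb = conv_bounds[OF assms(1) bp sup, of x]
  show "cauchy_kernel \<gamma> x / (2 + 2 * M\<^sup>2 / \<gamma>\<^sup>2) \<le> cauchy_conv \<gamma> \<mu> x" using cb by simp
  show "cauchy_conv \<gamma> \<mu> x \<le> 1 / (pi * \<gamma>)" using cb by simp
next
  fix t show "(SUP \<mu>\<in>B_set M. \<bar>ln (cauchy_conv \<gamma> \<mu> t)\<bar>)
              \<le> \<bar>ln (cauchy_kernel \<gamma> t)\<bar> + (ln (2 + 2 * M\<^sup>2 / \<gamma>\<^sup>2) + \<bar>ln (pi * \<gamma>)\<bar>)"
    by (rule part2[OF assms])
next
  fix \<mu> \<nu> assume "borel_prob \<mu> \<and> compact (measure_support \<mu>) \<and> borel_prob \<nu> \<and> integrable \<nu> (\<lambda>x. x\<^sup>2)"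
  then show "integrable lborel (\<lambda>x. ln (cauchy_conv \<gamma> \<mu> x) * cauchy_conv \<gamma> \<nu> x)"
    using part3[OF assms(1)] by blast
qed



end
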